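(* Let $\ell\ge1$ and let $V=v_\ell v_\ell\,v_{\ell-1}v_{\ell-1}\cdots v_2v_2\,v_1v_1=\prod_{j=\ell,\dots,2,1}(c_1x^jy^jc_2)^2$, where $v_j=c_1x^jy^jc_2$. The only accepting computation $\varepsilon\,\|\,V\vdash^*\varepsilon\,\|\,\varepsilon$ of the queue automaton is the one that, for each $k$, matches every symbol of one occurrence of $v_k$ in $V$ with the corresponding symbol of the other occurrence of $v_k$ in $V$.
   Context: Queue automaton: a configuration is written $Q\,\|\,x$ ($Q$ = queue contents, $x$ = remaining input); a step from $Q\,\|\,\sigma x$ ($\sigma$ a symbol) goes either to $Q\sigma\,\|\,x$ (push the input symbol) or, if $Q=\sigma Q'$, to $Q'\,\|\,x$ (the input symbol is matched against the leftmost queue symbol, which is popped; that queue symbol was pushed from an earlier input position and the two occurrences are said to be matched). $\vdash^*$ is zero or more steps; $\varepsilon$ is the empty string; an accepting computation of $w$ is a computation $\varepsilon\,\|\,w\vdash^*\varepsilon\,\|\,\varepsilon$. Here $c_1,c_2,x,y$ are four distinct symbols and $u^j$ denotes $j$ concatenated copies of $u$. *)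

theory Defs
  imports Main
begin

text \<open>A configuration Q || x is a pair (queue contents, remaining input).\<close>
type_synonym 'a qconf = "'a list \<times> 'a list"

inductive qstep :: "'a qconf \<Rightarrow> 'a qconf \<Rightarrow> bool" where
  push: "qstep (Q, s # x) (Q @ [s], x)"
| pop:  "qstep (s # Q, s # x) (Q, x)"

definition accepting_comp :: "'a list \<Rightarrow> 'a qconf list \<Rightarrow> bool" where
  "accepting_comp w cs \<longleftrightarrow> cs \<noteq> [] \<and> hd cs = ([], w) \<and> last cs = ([], []) \<and>
     (\<forall>i. Suc i < length cs \<longrightarrow> qstep (cs ! i) (cs ! Suc i))"

text \<open>Step i of a computation reads input position i; it is a push step iff the
  queue grows.\<close>
definition is_push :: "'a qconf list \<Rightarrow> nat \<Rightarrow> bool" where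
  "is_push cs i \<longleftrightarrow> length (fst (cs ! i)) < length (fst (cs ! Suc i))"

text \<open>Input positions p and q are matched: position p is pushed, position q pops,
  and by FIFO order the symbol popped at q is the one pushed at p
  (the n-th pushed symbol is the n-th popped one).\<close>
definition matched :: "'a qconf list \<Rightarrow> nat \<Rightarrow> nat \<Rightarrow> bool" where
  "matched cs p q \<longleftrightarrow> p < q \<and> Suc q < length cs \<and> is_push cs p \<and> \<not> is_push cs q \<and>
     card {j. j < p \<and> is_push cs j} = card {j. j < q \<and> \<not> is_push cs j}"

definition vblock :: "'a \<Rightarrow> 'a \<Rightarrow> 'a \<Rightarrow> 'a \<Rightarrow> nat \<Rightarrow> 'a list" where
  "vblock c1 c2 x y j = [c1] @ replicate j x @ replicate j y @ [c2]"

definition Vword :: "'a \<Rightarrow> 'a \<Rightarrow> 'a \<Rightarrow> 'a \<Rightarrow> nat \<Rightarrow> 'a list" where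
  "Vword c1 c2 x y l = concat (map (\<lambda>j. vblock c1 c2 x y j @ vblock c1 c2 x y j) (rev [1..<Suc l]))"

text \<open>Start position (0-based) of the first occurrence of v_k in V.\<close>
definition voff :: "nat \<Rightarrow> nat \<Rightarrow> nat" where
  "voff l k = (\<Sum>j\<in>{k<..l}. 2 * (2 * j + 2))"

end

theory Submission
  imports Defs
begin


fun run :: "'a list \<Rightarrow> 'a list \<Rightarrow> 'a list \<Rightarrow> bool" where
  "run Q [] Q' \<longleftrightarrow> Q' = Q"
| "run Q (a # w) Q' \<longleftrightarrow> run (Q @ [a]) w Q' \<or> (Q \<noteq> [] \<and> hd Q = a \<and> run (tl Q) w Q')"

lemma run_append: "run Q (u @ v) Q'' \<longleftrightarrow> (\<exists>Q'. run Q u Q' \<and> run Q' v Q'')"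
  by (induction u arbitrary: Q) auto

lemma run_push_all: "run Q w (Q @ w)"
proof (induction w arbitrary: Q)
  case (Cons a w)
  then show ?case using Cons.IH[of "Q @ [a]"] by simp
qed simp

lemma run_pop_all: "run (w @ Q) w Q"
  by (induction w) auto

lemma run_blocked:
  assumes "run (h # T) w Q'" "h \<notin> set w"
  shows "Q' = h # T @ w"
  using assms
proof (induction w arbitrary: T)
  case (Cons a w)
  then have "run (h # T @ [a]) w Q'" by auto
  then show ?case using Cons.IH[of "T @ [a]"] Cons.prems by simp
qed simp

lemma run_drop:
  assumes "run Q w Q'"
  shows "\<exists>i C. i \<le> length Q \<and> Q' = drop i Q @ C \<and>
     (\<forall>a. count_list (take i Q) a + count_list C a \<le> count_list w a)"
  using assms
proof (induction w arbitrary: Q)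
  case Nil
  then show ?case by (intro exI[of _ 0] exI[of _ "[]"]) auto
next
  case (Cons b w)
  from Cons.prems consider (push) "run (Q @ [b]) w Q'" | (pop) "Q \<noteq> []" "hd Q = b" "run (tl Q) w Q'"
    by auto
  then show ?case
  proof cases
    case push
    from Cons.IH[OF this] obtain i C where i: "i \<le> length (Q @ [b])" "Q' = drop i (Q @ [b]) @ C"
      "\<forall>a. count_list (take i (Q @ [b])) a + count_list C a \<le> count_list w a" by blast
    show ?thesis
    proof (cases "i \<le> length Q")
      case True
      then show ?thesis using i
        by (intro exI[of _ i] exI[of _ "b # C"]) auto
    next
      case False
      then have "i = length Q + 1" using i by auto
      have "\<forall>a. count_list (take (length Q) Q) a + count_list C a \<le> count_list (b # w) a"
      proof
        fix a
        have "count_list (take i (Q @ [b])) a = count_list Q a + count_list [b] a"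
          using \<open>i = length Q + 1\<close> by simp
        then show "count_list (take (length Q) Q) a + count_list C a \<le> count_list (b # w) a"
          using i(3)[rule_format, of a] by (simp split: if_splits)
      qed
      then show ?thesis using i \<open>i = length Q + 1\<close>
        by (intro exI[of _ "length Q"] exI[of _ C]) auto
    qed
  next
    case pop
    from Cons.IH[OF pop(3)] obtain i C where i: "i \<le> length (tl Q)" "Q' = drop i (tl Q) @ C"
      "\<forall>a. count_list (take i (tl Q)) a + count_list C a \<le> count_list w a" by blast
    from pop obtain Q0 where Q: "Q = b # Q0" by (cases Q) auto
    show ?thesis using i Q
      by (intro exI[of _ "Suc i"] exI[of _ C]) auto
  qed
qed

lemma run_count:
  assumes "run Q w Q'"
  shows "\<exists>p. p \<le> count_list w a \<and> count_list Q a + count_list w a = count_list Q' a + 2 * p"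
  using assms
proof (induction w arbitrary: Q)
  case Nil then show ?case by auto
next
  case (Cons b w)
  from Cons.prems consider (push) "run (Q @ [b]) w Q'" | (pop) "Q \<noteq> []" "hd Q = b" "run (tl Q) w Q'"
    by auto
  then show ?case
  proof cases
    case push
    from Cons.IH[OF this] obtain p where "p \<le> count_list w a"
      "count_list (Q @ [b]) a + count_list w a = count_list Q' a + 2 * p" by blast
    then show ?thesis by (intro exI[of _ p]) auto
  next
    case pop
    from pop obtain Q0 where Q: "Q = b # Q0" by (cases Q) auto
    from Cons.IH[OF pop(3)] obtain p where "p \<le> count_list w a"
      "count_list (tl Q) a + count_list w a = count_list Q' a + 2 * p" by blast
    then show ?thesis using Q
      by (intro exI[of _ "p + (if a = b then 1 else 0)"]) auto
  qed
qed

lemma run_even: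
  assumes "run Q w []" "even (count_list w a)"
  shows "even (count_list Q a)"
proof -
  obtain p where "count_list Q a + count_list w a = 2 * p"
    using run_count[OF assms(1), of a] by auto
  then have "even (count_list Q a + count_list w a)" by simp
  then show ?thesis using assms(2) by simp
qed

lemma run_len: "run Q w [] \<Longrightarrow> length Q \<le> length w"
proof (induction w arbitrary: Q)
  case (Cons a w)
  then consider "run (Q @ [a]) w []" | "Q \<noteq> []" "run (tl Q) w []" by auto
  then show ?case
  proof cases
    case 1 then show ?thesis using Cons.IH[of "Q @ [a]"] by simp
  next
    case 2 then show ?thesis using Cons.IH[of "tl Q"] by (cases Q) auto
  qed
qed simp




lemma run_intact:
  assumes "run (A @ r # B) w Q'" "r \<notin> set w"
  shows "\<exists>A' C. Q' = A' @ r # B @ C"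
proof -
  obtain i C where i: "i \<le> length (A @ r # B)" "Q' = drop i (A @ r # B) @ C"
    "\<forall>a. count_list (take i (A @ r # B)) a + count_list C a \<le> count_list w a"
    using run_drop[OF assms(1)] by blast
  have cw: "count_list w r = 0" using assms(2) by (simp add: count_list_0_iff)
  have "i \<le> length A"
  proof (rule ccontr)
    assume "\<not> i \<le> length A"
    then have "take i (A @ r # B) = A @ r # take (i - length A - 1) B"
      by (cases "i - length A") (auto simp: take_append)
    then have "count_list (take i (A @ r # B)) r \<ge> 1" by simp
    then show False using i(3)[rule_format, of r] cw by simp
  qed
  then show ?thesis using i(2) by (intro exI[of _ "drop i A"] exI[of _ C]) simp
qed

lemma count_rep: "count_list (replicate n r) a = (if r = a then n else 0)"
  by (induction n) auto

lemma count_take_le: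
  assumes h: "\<forall>a. count_list L a \<le> count_list (replicate s r) a"
  shows "set L \<subseteq> {r} \<and> length L \<le> s"
proof -
  have all: "\<forall>a\<in>set L. a = r"
  proof
    fix a assume "a \<in> set L"
    then have "count_list L a \<noteq> 0" by (simp add: count_list_0_iff)
    then have "count_list (replicate s r) a \<noteq> 0" using h[rule_format, of a] by linarith
    then show "a = r" by (simp add: count_rep split: if_splits)
  qed
  then have "filter ((=) r) L = L" by (simp add: filter_id_conv)
  then have "count_list L r = length L" by (metis count_list_eq_length_filter)
  then show ?thesis using h[rule_format, of r] all by (auto simp: count_rep)
qed

lemma run_block:
  assumes "run (A @ replicate g r @ B) (replicate s r) Q'" "s < g"
  shows "(\<exists>A' C. Q' = A' @ replicate g r @ B @ C) \<or> (\<exists>k C. 0 < k \<and> Q' = replicate k r @ B @ C)"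
proof -
  obtain i C where i: "i \<le> length (A @ replicate g r @ B)" "Q' = drop i (A @ replicate g r @ B) @ C"
    "\<forall>a. count_list (take i (A @ replicate g r @ B)) a + count_list C a \<le> count_list (replicate s r) a"
    using run_drop[OF assms(1)] by blast
  show ?thesis
  proof (cases "i \<le> length A")
    case True
    then have "Q' = drop i A @ replicate g r @ B @ C" using i(2) by simp
    then show ?thesis by (intro disjI1 exI[of _ "drop i A"] exI[of _ C])
  next
    case False
    have cnt: "\<forall>a. count_list (take i (A @ replicate g r @ B)) a \<le> count_list (replicate s r) a"
    proof
      fix a show "count_list (take i (A @ replicate g r @ B)) a \<le> count_list (replicate s r) a"
        using i(3)[rule_format, of a] by linarith
    qed
    have "length (take i (A @ replicate g r @ B)) \<le> s" using count_take_le[OF cnt] by (simp only:)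
    then have "i \<le> s" using i(1) by simp
    then have lt: "i - length A < g" using assms(2) by linarith
    have "drop i (A @ replicate g r @ B) = drop (i - length A) (replicate g r @ B)"
      using False by simp
    also have "\<dots> = replicate (g - (i - length A)) r @ B" using lt by simp
    finally have "Q' = replicate (g - (i - length A)) r @ B @ C" using i(2) by simp
    moreover have "0 < g - (i - length A)" using lt by simp
    ultimately show ?thesis by (intro disjI2 exI[of _ "g - (i - length A)"] exI[of _ C]) simp
  qed
qed

context
  fixes c1 c2 x y :: 'a
  assumes dist: "distinct [c1, c2, x, y]"
begin

abbreviation sg where "sg s \<equiv> vblock c1 c2 x y s"
abbreviation VV where "VV m \<equiv> Vword c1 c2 x y m"

lemma sg_eq: "sg s = c1 # replicate s x @ replicate s y @ [c2]"
  by (simp add: vblock_def)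

lemma VV_0: "VV 0 = []" by (simp add: Vword_def)

lemma VV_Suc: "VV (Suc m) = sg (Suc m) @ sg (Suc m) @ VV m"
  by (simp add: Vword_def)

lemma even_VV: "even (count_list (VV m) a)"
proof (induction m)
  case 0 then show ?case by (simp add: VV_0)
next
  case (Suc m)
  have "count_list (VV (Suc m)) a = 2 * count_list (sg (Suc m)) a + count_list (VV m) a"
    by (simp only: VV_Suc count_list_append) 
  then show ?case using Suc by simp
qed


lemma dd: "c1 \<noteq> c2" "c1 \<noteq> x" "c1 \<noteq> y" "c2 \<noteq> x" "c2 \<noteq> y" "x \<noteq> y"
  using dist by auto

lemma rep_cons: "0 < g \<Longrightarrow> replicate g r = r # replicate (g - 1) r"
  by (cases g) auto

lemma intact_rep:
  assumes "run (A @ replicate g r @ B) w Q'" "r \<notin> set w" "0 < g"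
  shows "\<exists>A' C. Q' = A' @ replicate g r @ B @ C"
proof -
  have e: "A @ replicate g r @ B = A @ r # (replicate (g - 1) r @ B)" using rep_cons[OF assms(3), of r] by simp
  have "run (A @ r # (replicate (g - 1) r @ B)) w Q'" using assms(1) unfolding e .
  from run_intact[OF this assms(2)] obtain A' C where "Q' = A' @ r # (replicate (g - 1) r @ B) @ C"
    by blast
  then have "Q' = A' @ replicate g r @ B @ C" using rep_cons[OF assms(3), of r] by simp
  then show ?thesis by (intro exI[of _ A'] exI[of _ C])
qed

lemma seg_x:
  assumes "run (A @ replicate g x @ B) (sg s) Q'" "s < g"
  shows "(\<exists>A' B'. Q' = A' @ replicate g x @ B') \<or> (\<exists>k T. 0 < k \<and> Q' = replicate k x @ T @ replicate s y @ [c2])"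
proof -
  have g0: "0 < g" using assms(2) by simp
  have sgd: "sg s = [c1] @ (replicate s x @ (replicate s y @ [c2]))" by (simp add: sg_eq)
  from run_append[THEN iffD1, OF assms(1)[unfolded sgd]] obtain Q1 where r1: "run (A @ replicate g x @ B) [c1] Q1"
    and r23: "run Q1 (replicate s x @ (replicate s y @ [c2])) Q'" by blast
  from run_append[THEN iffD1, OF r23] obtain Q2 where
    r2: "run Q1 (replicate s x) Q2" and r3: "run Q2 (replicate s y @ [c2]) Q'" by blast
  from intact_rep[OF r1 _ g0] obtain A1 C1 where q1: "Q1 = A1 @ replicate g x @ B @ C1"
    using dd by auto
  have r2': "run (A1 @ replicate g x @ (B @ C1)) (replicate s x) Q2" using r2 unfolding q1 by simp
  from run_block[OF r2' assms(2)] show ?thesis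
  proof
    assume "\<exists>A' C. Q2 = A' @ replicate g x @ (B @ C1) @ C"
    then obtain A2 C2 where q2: "Q2 = A2 @ replicate g x @ (B @ C1 @ C2)" by auto
    have "x \<notin> set (replicate s y @ [c2])" using dd by auto
    from intact_rep[OF r3[unfolded q2] this g0] obtain A3 C3 where
      "Q' = A3 @ replicate g x @ (B @ C1 @ C2) @ C3" by blast
    then show ?thesis by (intro disjI1 exI[of _ A3] exI[of _ "B @ C1 @ C2 @ C3"]) simp
  next
    assume "\<exists>k C. 0 < k \<and> Q2 = replicate k x @ (B @ C1) @ C"
    then obtain k C2 where k: "0 < k" and q2: "Q2 = replicate k x @ (B @ C1) @ C2" by blast
    have e: "Q2 = x # (replicate (k - 1) x @ B @ C1 @ C2)" using q2 rep_cons[OF k, of x] by simp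
    have "run (x # (replicate (k - 1) x @ B @ C1 @ C2)) (replicate s y @ [c2]) Q'"
      using r3 unfolding e .
    moreover have "x \<notin> set (replicate s y @ [c2])" using dd by auto
    ultimately have "Q' = x # (replicate (k - 1) x @ B @ C1 @ C2) @ replicate s y @ [c2]"
      by (rule run_blocked)
    then have "Q' = replicate k x @ (B @ C1 @ C2) @ replicate s y @ [c2]" using rep_cons[OF k, of x] by simp
    then show ?thesis using k by (intro disjI2 exI[of _ k] exI[of _ "B @ C1 @ C2"]) simp
  qed
qed

lemma seg_y:
  assumes "run (A @ replicate g y @ B) (sg s) Q'" "s < g"
  shows "(\<exists>A' B'. Q' = A' @ replicate g y @ B') \<or> (\<exists>k T. 0 < k \<and> Q' = replicate k y @ T @ [c2])"
proof -
  have g0: "0 < g" using assms(2) by simp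
  have sgd: "sg s = (c1 # replicate s x) @ (replicate s y @ [c2])" by (simp add: sg_eq)
  from run_append[THEN iffD1, OF assms(1)[unfolded sgd]] obtain Q1 where r1: "run (A @ replicate g y @ B) (c1 # replicate s x) Q1"
    and r23: "run Q1 (replicate s y @ [c2]) Q'" by blast
  from run_append[THEN iffD1, OF r23] obtain Q2 where
    r2: "run Q1 (replicate s y) Q2" and r3: "run Q2 [c2] Q'" by blast
  from intact_rep[OF r1 _ g0] obtain A1 C1 where q1: "Q1 = A1 @ replicate g y @ B @ C1"
    using dd by auto
  have r2': "run (A1 @ replicate g y @ (B @ C1)) (replicate s y) Q2" using r2 unfolding q1 by simp
  from run_block[OF r2' assms(2)] show ?thesis
  proof
    assume "\<exists>A' C. Q2 = A' @ replicate g y @ (B @ C1) @ C"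
    then obtain A2 C2 where q2: "Q2 = A2 @ replicate g y @ (B @ C1 @ C2)" by auto
    have "y \<notin> set [c2]" using dd by auto
    from intact_rep[OF r3[unfolded q2] this g0] obtain A3 C3 where
      "Q' = A3 @ replicate g y @ (B @ C1 @ C2) @ C3" by blast
    then show ?thesis by (intro disjI1 exI[of _ A3] exI[of _ "B @ C1 @ C2 @ C3"]) simp
  next
    assume "\<exists>k C. 0 < k \<and> Q2 = replicate k y @ (B @ C1) @ C"
    then obtain k C2 where k: "0 < k" and q2: "Q2 = replicate k y @ (B @ C1) @ C2" by blast
    have e: "Q2 = y # (replicate (k - 1) y @ B @ C1 @ C2)" using q2 rep_cons[OF k, of y] by simp
    have "run (y # (replicate (k - 1) y @ B @ C1 @ C2)) [c2] Q'"
      using r3 unfolding e .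
    moreover have "y \<notin> set [c2]" using dd by auto
    ultimately have "Q' = y # (replicate (k - 1) y @ B @ C1 @ C2) @ [c2]"
      by (rule run_blocked)
    then have "Q' = replicate k y @ (B @ C1 @ C2) @ [c2]" using rep_cons[OF k, of y] by simp
    then show ?thesis using k by (intro disjI2 exI[of _ k] exI[of _ "B @ C1 @ C2"]) simp
  qed
qed


lemma count_take_drop: "count_list (take i L) a + count_list (drop i L) a = count_list L a"
  by (metis append_take_drop_id count_list_append)

lemma cornerX:
  assumes "run (replicate k x @ T @ replicate s y @ [c2]) (sg s) Q'" "0 < k"
  shows "(\<exists>U W. Q' = U @ replicate s y @ W) \<or> count_list Q' c1 = 1"
proof -
  let ?P = "replicate k x @ T"
  let ?w = "replicate s x @ replicate s y @ [c2]"
  have sgd: "sg s = [c1] @ ?w" by (simp add: sg_eq)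
  from run_append[THEN iffD1, OF assms(1)[unfolded sgd]] obtain Q1 where
    r1: "run (replicate k x @ T @ replicate s y @ [c2]) [c1] Q1" and r2: "run Q1 ?w Q'" by blast
  have e0: "replicate k x @ T @ replicate s y @ [c2] = x # (replicate (k - 1) x @ T @ replicate s y @ [c2])"
    using rep_cons[OF assms(2), of x] by simp
  have "x \<notin> set [c1]" using dd by auto
  from run_blocked[OF r1[unfolded e0] this]
  have q1: "Q1 = ?P @ replicate s y @ [c2, c1]" using rep_cons[OF assms(2), of x] by simp
  obtain i C where i: "i \<le> length Q1" "Q' = drop i Q1 @ C"
    "\<forall>a. count_list (take i Q1) a + count_list C a \<le> count_list ?w a"
    using run_drop[OF r2] by blast
  have wc1: "count_list ?w c1 = 0" using dd by (simp add: count_rep)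
  show ?thesis
  proof (cases "i \<le> length ?P")
    case True
    then have "Q' = drop i ?P @ replicate s y @ ([c2, c1] @ C)" using i(2) q1 by simp
    then show ?thesis by (intro disjI1 exI[of _ "drop i ?P"] exI[of _ "[c2, c1] @ C"])
  next
    case False
    then have "take i Q1 = ?P @ take (i - length ?P) (replicate s y @ [c2, c1])"
      using q1 by simp
    then have "count_list ?P c1 \<le> count_list (take i Q1) c1" by simp
    moreover have "count_list (take i Q1) c1 = 0" "count_list C c1 = 0"
      using i(3)[rule_format, of c1] wc1 by auto
    ultimately have P0: "count_list ?P c1 = 0" by simp
    have "count_list Q1 c1 = 1" using q1 P0 dd by (simp add: count_rep)
    then have "count_list (drop i Q1) c1 = 1"
      using count_take_drop[of i Q1 c1] \<open>count_list (take i Q1) c1 = 0\<close> by simp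
    then show ?thesis using i(2) \<open>count_list C c1 = 0\<close> by simp
  qed
qed

lemma cornerY:
  assumes "run (replicate k y @ T) (sg s @ sg s) Q'" "0 < k" "c2 \<in> set T"
  shows "(\<exists>U W. Q' = U @ replicate s x @ W) \<or> count_list Q' c2 = 1"
proof -
  let ?P = "replicate k y @ T"
  have sgd: "sg s @ sg s = (c1 # replicate s x) @ ((replicate s y @ [c2]) @ ([c1] @ ((replicate s x @ replicate s y) @ [c2])))"
    by (simp add: sg_eq)
  from run_append[THEN iffD1, OF assms(1)[unfolded sgd]] obtain Qa where
    ra: "run ?P (c1 # replicate s x) Qa" and rest1: "run Qa ((replicate s y @ [c2]) @ ([c1] @ ((replicate s x @ replicate s y) @ [c2]))) Q'"
    by blast
  from run_append[THEN iffD1, OF rest1] obtain Qm where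
    rb: "run Qa (replicate s y @ [c2]) Qm" and rest2: "run Qm ([c1] @ ((replicate s x @ replicate s y) @ [c2])) Q'"
    by blast
  from run_append[THEN iffD1, OF rest2] obtain Qc where
    rc: "run Qm [c1] Qc" and rd: "run Qc ((replicate s x @ replicate s y) @ [c2]) Q'"
    by blast
  have e0: "?P = y # (replicate (k - 1) y @ T)" using rep_cons[OF assms(2), of y] by simp
  have "y \<notin> set (c1 # replicate s x)" using dd by auto
  from run_blocked[OF ra[unfolded e0] this]
  have qa: "Qa = ?P @ c1 # replicate s x" using rep_cons[OF assms(2), of y] by simp
  obtain i C1 where i: "i \<le> length Qa" "Qm = drop i Qa @ C1"
    "\<forall>a. count_list (take i Qa) a + count_list C1 a \<le> count_list (replicate s y @ [c2]) a"
    using run_drop[OF rb] by blast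
  have "i \<le> length ?P"
  proof (rule ccontr)
    assume "\<not> i \<le> length ?P"
    then have "take i Qa = ?P @ take (i - length ?P) (c1 # replicate s x)" using qa by simp
    also have "\<dots> = ?P @ c1 # take (i - length ?P - 1) (replicate s x)"
      using \<open>\<not> i \<le> length ?P\<close> by (cases "i - length ?P") auto
    finally have "count_list (take i Qa) c1 \<ge> 1" by simp
    moreover have "count_list (replicate s y @ [c2]) c1 = 0" using dd by (simp add: count_rep)
    ultimately show False using i(3)[rule_format, of c1] by simp
  qed
  then have qm: "Qm = drop i ?P @ c1 # replicate s x @ C1" using i(2) qa by simp
  have nc1: "c1 \<notin> set ((replicate s x @ replicate s y) @ [c2])" using dd by auto
  from rc consider (push) "Qc = Qm @ [c1]" | (pop) "Qm \<noteq> []" "hd Qm = c1" "Qc = tl Qm" by auto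
  then show ?thesis
  proof cases
    case push
    have "run (drop i ?P @ c1 # (replicate s x @ C1 @ [c1])) ((replicate s x @ replicate s y) @ [c2]) Q'"
      using rd push qm by simp
    from run_intact[OF this nc1] obtain A' C where "Q' = A' @ c1 # (replicate s x @ C1 @ [c1]) @ C"
      by blast
    then show ?thesis by (intro disjI1 exI[of _ "A' @ [c1]"] exI[of _ "C1 @ [c1] @ C"]) simp
  next
    case pop
    show ?thesis
    proof (cases "drop i ?P = []")
      case False
      have "Qc = tl (drop i ?P) @ c1 # (replicate s x @ C1)"
        using pop(3) qm tl_append2[OF False, of "c1 # (replicate s x @ C1)"] by (simp only: append.assoc)
      then have "run (tl (drop i ?P) @ c1 # (replicate s x @ C1)) ((replicate s x @ replicate s y) @ [c2]) Q'"
        using rd by simp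
      from run_intact[OF this nc1] obtain A' C where "Q' = A' @ c1 # (replicate s x @ C1) @ C"
        by blast
      then show ?thesis by (intro disjI1 exI[of _ "A' @ [c1]"] exI[of _ "C1 @ C"]) simp
    next
      case True
      then have qc: "Qc = replicate s x @ C1" using pop qm by simp
      have "length ?P \<le> i" using True by (simp only: drop_eq_Nil)
      then have "i = length ?P" using \<open>i \<le> length ?P\<close> by linarith
      then have "take i Qa = ?P" using qa by simp
      then have "count_list (take i Qa) c2 \<ge> 1" using assms(3)
        by (simp add: Suc_le_eq count_list_0_iff[symmetric] del: count_list_0_iff)
           (metis count_list_0_iff gr0I)
      then have C10: "count_list C1 c2 = 0" using i(3)[rule_format, of c2] dd by (simp add: count_rep)
      from run_append[THEN iffD1, OF rd] obtain Qb where
        r1: "run Qc (replicate s x @ replicate s y) Qb" and r2: "run Qb [c2] Q'" by blast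
      obtain i2 C2 where i2: "Qb = drop i2 Qc @ C2"
        "\<forall>a. count_list (take i2 Qc) a + count_list C2 a \<le> count_list (replicate s x @ replicate s y) a"
        using run_drop[OF r1] by blast
      have "count_list C2 c2 = 0" using i2(2)[rule_format, of c2] dd by (simp add: count_rep)
      moreover have "count_list (drop i2 Qc) c2 = 0"
        using count_take_drop[of i2 Qc c2] qc C10 dd by (simp add: count_rep)
      ultimately have "count_list Qb c2 = 0" using i2(1) by simp
      then have nb: "c2 \<notin> set Qb" by (simp add: count_list_0_iff)
      from r2 have "Q' = Qb @ [c2]"
      proof (cases rule: disjE[OF r2[unfolded run.simps]])
      qed (use nb in \<open>auto dest: hd_in_set\<close>)
      then show ?thesis using \<open>count_list Qb c2 = 0\<close> by simp
    qed
  qed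
qed


lemma run_Nil_iff: "run Q [] Q' \<longleftrightarrow> Q' = Q" by simp

lemma VV_par: "run Q (VV n) [] \<Longrightarrow> even (count_list Q a)"
  by (erule run_even) (rule even_VV)

lemma claimR:
  "m < g \<Longrightarrow> (r = x \<or> r = y) \<Longrightarrow> run (A @ replicate g r @ B) (VV m) [] \<Longrightarrow> False"
proof (induction m arbitrary: A B g r rule: less_induct)
  case (less m)
  show ?case
  proof (cases m)
    case 0
    then have "A @ replicate g r @ B = []" using less.prems(3) by (simp add: VV_0)
    then show False using less.prems(1) by simp
  next
    case (Suc n)
    have nlt: "n < m" using Suc by simp
    note IH = less.IH[OF nlt]
    have Ng: "Suc n < g" using less.prems(1) Suc by simp
    from run_append[THEN iffD1, OF less.prems(3)[unfolded Suc VV_Suc]] obtain Q1 where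
      r1: "run (A @ replicate g r @ B) (sg (Suc n)) Q1" and r23: "run Q1 (sg (Suc n) @ VV n) []" by blast
    from run_append[THEN iffD1, OF r23] obtain Q2 where
      r2: "run Q1 (sg (Suc n)) Q2" and r3: "run Q2 (VV n) []" by blast
    from less.prems(2) show False
    proof
      assume rx: "r = x"
      from seg_x[OF r1[unfolded rx] Ng] show False
      proof
        assume "\<exists>A' B'. Q1 = A' @ replicate g x @ B'"
        then obtain A1 B1 where q1: "Q1 = A1 @ replicate g x @ B1" by blast
        from seg_x[OF r2[unfolded q1] Ng] show False
        proof
          assume "\<exists>A' B'. Q2 = A' @ replicate g x @ B'"
          then obtain A2 B2 where q2: "Q2 = A2 @ replicate g x @ B2" by blast
          have "run (A2 @ replicate g x @ B2) (VV n) []" using r3 unfolding q2 .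
          from IH[OF _ _ this] show False using Ng by simp
        next
          assume "\<exists>k T. 0 < k \<and> Q2 = replicate k x @ T @ replicate (Suc n) y @ [c2]"
          then obtain k T where "Q2 = replicate k x @ T @ replicate (Suc n) y @ [c2]" by blast
          then have q2: "Q2 = (replicate k x @ T) @ replicate (Suc n) y @ [c2]" by simp
          have "run ((replicate k x @ T) @ replicate (Suc n) y @ [c2]) (VV n) []" using r3 unfolding q2 .
          from IH[OF _ _ this] show False by simp
        qed
      next
        assume "\<exists>k T. 0 < k \<and> Q1 = replicate k x @ T @ replicate (Suc n) y @ [c2]"
        then obtain k T where k: "0 < k" and q1: "Q1 = replicate k x @ T @ replicate (Suc n) y @ [c2]" by blast
        from cornerX[OF r2[unfolded q1] k] show False
        proof
          assume "\<exists>U W. Q2 = U @ replicate (Suc n) y @ W"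
          then obtain U W where q2: "Q2 = U @ replicate (Suc n) y @ W" by blast
          have "run (U @ replicate (Suc n) y @ W) (VV n) []" using r3 unfolding q2 .
          from IH[OF _ _ this] show False by simp
        next
          assume "count_list Q2 c1 = 1"
          moreover have "even (count_list Q2 c1)" using VV_par[OF r3] .
          ultimately show False by simp
        qed
      qed
    next
      assume ry: "r = y"
      from seg_y[OF r1[unfolded ry] Ng] show False
      proof
        assume "\<exists>A' B'. Q1 = A' @ replicate g y @ B'"
        then obtain A1 B1 where q1: "Q1 = A1 @ replicate g y @ B1" by blast
        from seg_y[OF r2[unfolded q1] Ng] show False
        proof
          assume "\<exists>A' B'. Q2 = A' @ replicate g y @ B'"
          then obtain A2 B2 where q2: "Q2 = A2 @ replicate g y @ B2" by blast
          have "run (A2 @ replicate g y @ B2) (VV n) []" using r3 unfolding q2 .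
          from IH[OF _ _ this] show False using Ng by simp
        next
          assume "\<exists>k T. 0 < k \<and> Q2 = replicate k y @ T @ [c2]"
          then obtain k T where k: "0 < k" and "Q2 = replicate k y @ T @ [c2]" by blast
          then have q2: "Q2 = replicate k y @ (T @ [c2])" by simp
          show False
          proof (cases n)
            case 0
            then have "Q2 = []" using r3 by (simp add: VV_0)
            then show False using q2 k by simp
          next
            case (Suc n')
            have "n' < m" using Suc \<open>m = Suc n\<close> by simp
            note IH2 = less.IH[OF this]
            from run_append[THEN iffD1, OF r3[unfolded Suc VV_Suc append.assoc[symmetric]]] obtain Q3 where
              r4: "run Q2 (sg (Suc n') @ sg (Suc n')) Q3" and r5: "run Q3 (VV n') []" by blast
            have "c2 \<in> set (T @ [c2])" by simp
            from cornerY[OF r4[unfolded q2] k this] show False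
            proof
              assume "\<exists>U W. Q3 = U @ replicate (Suc n') x @ W"
              then obtain U W where q3: "Q3 = U @ replicate (Suc n') x @ W" by blast
              have "run (U @ replicate (Suc n') x @ W) (VV n') []" using r5 unfolding q3 .
              from IH2[OF _ _ this] show False by simp
            next
              assume "count_list Q3 c2 = 1"
              moreover have "even (count_list Q3 c2)" using VV_par[OF r5] .
              ultimately show False by simp
            qed
          qed
        qed
      next
        assume "\<exists>k T. 0 < k \<and> Q1 = replicate k y @ T @ [c2]"
        then obtain k T where k: "0 < k" and q1: "Q1 = replicate k y @ T @ [c2]" by blast
        have sgd: "sg (Suc n) = (c1 # replicate (Suc n) x) @ (replicate (Suc n) y @ [c2])"
          by (simp add: sg_eq)
        from run_append[THEN iffD1, OF r2[unfolded sgd]] obtain Qa where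
          ra: "run Q1 (c1 # replicate (Suc n) x) Qa" and rb: "run Qa (replicate (Suc n) y @ [c2]) Q2" by blast
        have e0: "Q1 = y # (replicate (k - 1) y @ T @ [c2])" using q1 rep_cons[OF k, of y] by simp
        have "y \<notin> set (c1 # replicate (Suc n) x)" using dd by auto
        from run_blocked[OF ra[unfolded e0] this]
        have qa: "Qa = Q1 @ c1 # replicate (Suc n) x" using e0 by simp
        have "c1 \<notin> set (replicate (Suc n) y @ [c2])" using dd by auto
        from run_intact[OF rb[unfolded qa] this] obtain A' C where
          q2: "Q2 = A' @ c1 # replicate (Suc n) x @ C" by blast
        have "run ((A' @ [c1]) @ replicate (Suc n) x @ C) (VV n) []" using r3 unfolding q2 by simp
        from IH[OF _ _ this] show False by simp
      qed
    qed
  qed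
qed


lemma sg_nth: "i < length (sg L) \<Longrightarrow> sg L ! i = (if i = 0 then c1 else if i \<le> L then x else if i \<le> 2 * L then y else c2)"
proof -
  assume i: "i < length (sg L)"
  then have i2: "i < 2 * L + 2" by (simp add: sg_eq)
  show ?thesis
  proof (cases i)
    case 0 then show ?thesis by (simp add: sg_eq)
  next
    case (Suc j)
    then have "sg L ! i = (replicate L x @ replicate L y @ [c2]) ! j" by (simp add: sg_eq)
    also have "\<dots> = (if j < L then x else if j < 2 * L then y else c2)"
      using i2 Suc by (auto simp: nth_append)
    finally show ?thesis using Suc by auto
  qed
qed

lemma sg_contig:
  assumes "q \<le> r" "r \<le> p" "p < length (sg L)" "sg L ! q = sg L ! p"
  shows "sg L ! r = sg L ! q"
proof -
  have "q < length (sg L)" "r < length (sg L)" using assms by auto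
  with assms sg_nth show ?thesis using dd
    by (smt (verit, ccfv_threshold) le_trans not_le zero_less_iff_neq_zero le_zero_eq)
qed

lemma first_copy:
  assumes "p \<le> length (sg L)" "run [] (take p (sg L)) Q"
  shows "Q = take p (sg L)"
proof (cases p)
  case 0 then show ?thesis using assms by simp
next
  case (Suc p')
  have e: "take p (sg L) = c1 # take p' (replicate L x @ replicate L y @ [c2])"
    using Suc by (simp add: sg_eq)
  have "run [c1] (take p' (replicate L x @ replicate L y @ [c2])) Q"
    using assms(2) unfolding e by simp
  moreover have "c1 \<notin> set (take p' (replicate L x @ replicate L y @ [c2]))"
    using dd by (auto dest: in_set_takeD)
  ultimately have "Q = c1 # [] @ take p' (replicate L x @ replicate L y @ [c2])"
    by (rule run_blocked)
  then show ?thesis using e by simp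
qed

lemma second_copy:
  assumes "p \<le> length (sg L)" "run (sg L) (take p (sg L)) Q"
  shows "\<exists>q \<le> p. Q = drop q (sg L) @ take (p - q) (drop q (sg L))"
  using assms
proof (induction p arbitrary: Q)
  case 0 then show ?case by (intro exI[of _ 0]) simp
next
  case (Suc p)
  let ?v = "sg L"
  have pl: "p < length ?v" using Suc.prems(1) by simp
  have tk: "take (Suc p) ?v = take p ?v @ [?v ! p]" using pl by (simp add: take_Suc_conv_app_nth)
  from run_append[THEN iffD1, OF Suc.prems(2)[unfolded tk]] obtain Q0 where
    r0: "run ?v (take p ?v) Q0" and r1: "run Q0 [?v ! p] Q" by blast
  from Suc.IH[OF _ r0] pl obtain q where q: "q \<le> p" "Q0 = drop q ?v @ take (p - q) (drop q ?v)" by auto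
  have ql: "q < length ?v" using q pl by simp
  from r1 consider (push) "Q = Q0 @ [?v ! p]" | (pop) "Q0 \<noteq> []" "hd Q0 = ?v ! p" "Q = tl Q0" by auto
  then show ?case
  proof cases
    case push
    have "p - q < length (drop q ?v)" using pl q by simp
    then have "take (Suc p - q) (drop q ?v) = take (p - q) (drop q ?v) @ [drop q ?v ! (p - q)]"
      using q(1) by (simp add: Suc_diff_le take_Suc_conv_app_nth)
    moreover have "drop q ?v ! (p - q) = ?v ! p" using q(1) pl by simp
    ultimately have "Q = drop q ?v @ take (Suc p - q) (drop q ?v)" using push q(2) by simp
    then show ?thesis using q(1) by (intro exI[of _ q]) simp
  next
    case pop
    have dq: "drop q ?v = ?v ! q # drop (Suc q) ?v" using ql by (simp add: Cons_nth_drop_Suc)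
    have hq: "?v ! q = ?v ! p" using pop(2) q(2) dq by simp
    have eqt: "take (p - q) (drop q ?v) = take (p - q) (drop (Suc q) ?v)"
    proof (rule nth_equalityI)
      show "length (take (p - q) (drop q ?v)) = length (take (p - q) (drop (Suc q) ?v))"
        using pl q(1) by simp
    next
      fix r assume "r < length (take (p - q) (drop q ?v))"
      then have r: "r < p - q" by simp
      have a: "take (p - q) (drop q ?v) ! r = ?v ! (q + r)" using r pl by simp
      have b: "take (p - q) (drop (Suc q) ?v) ! r = ?v ! (Suc q + r)" using r pl by simp
      have "?v ! (q + r) = ?v ! q" using sg_contig[of q "q + r" p L] r pl hq by simp
      moreover have "?v ! (Suc q + r) = ?v ! q" using sg_contig[of q "Suc q + r" p L] r pl hq by simp
      ultimately show "take (p - q) (drop q ?v) ! r = take (p - q) (drop (Suc q) ?v) ! r"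
        using a b by simp
    qed
    have "Q = drop (Suc q) ?v @ take (p - q) (drop q ?v)" using pop(3) q(2) dq by simp
    then have "Q = drop (Suc q) ?v @ take (Suc p - Suc q) (drop (Suc q) ?v)" using eqt by simp
    then show ?thesis using q(1) by (intro exI[of _ "Suc q"]) simp
  qed
qed


lemma drop_rep_c: "k \<le> L \<Longrightarrow> drop k (replicate L r @ [a]) = replicate (L - k) r @ [a]"
  by (simp add: drop_append)

lemma lemD:
  assumes "q < length (sg (Suc l'))" "run (drop q (sg (Suc l')) @ drop q (sg (Suc l'))) (VV l') []"
  shows False
proof -
  let ?L = "Suc l'"
  let ?s = "drop q (sg ?L)"
  show False
  proof (cases "q \<le> ?L + 1")
    case True
    have e: "sg ?L = (c1 # replicate ?L x) @ (replicate ?L y @ [c2])" by (simp add: sg_eq)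
    have "?s = drop q (c1 # replicate ?L x) @ drop (q - length (c1 # replicate ?L x)) (replicate ?L y @ [c2])"
      unfolding e by (rule drop_append)
    also have "q - length (c1 # replicate ?L x) = 0" using True by simp
    finally have "?s = drop q (c1 # replicate ?L x) @ replicate ?L y @ [c2]" by simp
    then have "?s @ ?s = drop q (c1 # replicate ?L x) @ replicate ?L y @ ([c2] @ ?s)" by simp
    then have "run (drop q (c1 # replicate ?L x) @ replicate ?L y @ ([c2] @ ?s)) (VV l') []"
      using assms(2) by simp
    from claimR[OF _ _ this] show False by simp
  next
    case False
    define j where "j = 2 * ?L + 1 - q"
    have ql: "q < 2 * ?L + 2" using assms(1) by (simp add: sg_eq)
    have e: "sg ?L = (c1 # replicate ?L x) @ (replicate ?L y @ [c2])" by (simp add: sg_eq)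
    have "?s = drop q (c1 # replicate ?L x) @ drop (q - length (c1 # replicate ?L x)) (replicate ?L y @ [c2])"
      unfolding e by (rule drop_append)
    also have "drop q (c1 # replicate ?L x) = []" using False by simp
    also have "q - length (c1 # replicate ?L x) = q - (?L + 1)" by simp
    finally have "?s = drop (q - (?L + 1)) (replicate ?L y @ [c2])" by simp
    also have "\<dots> = replicate (?L - (q - (?L + 1))) y @ [c2]"
      by (rule drop_rep_c) (use ql in simp)
    also have "?L - (q - (?L + 1)) = j" using False ql unfolding j_def by simp
    finally have "drop q (sg ?L) = replicate j y @ [c2]" .
    then have sj: "?s = replicate j y @ [c2]" .
    have jl: "j < l' + 1" using False unfolding j_def by simp
    show False
    proof (cases l')
      case 0
      then have "?s @ ?s = []" using assms(2) by (simp add: VV_0)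
      then show False using sj by simp
    next
      case (Suc l'')
      let ?S = "replicate j y @ [c2] @ replicate j y @ [c2]"
      have SS: "?s @ ?s = ?S" using sj by simp
      have vv: "VV l' = (c1 # replicate l' x) @ (replicate l' y @ [c2]) @ ([c1] @ (replicate l' x @ replicate l' y @ [c2])) @ VV l''"
        using Suc by (simp add: VV_Suc sg_eq)
      from run_append[THEN iffD1, OF assms(2)[unfolded SS vv]] obtain Qa where
        ra: "run ?S (c1 # replicate l' x) Qa" and
        rest1: "run Qa ((replicate l' y @ [c2]) @ ([c1] @ (replicate l' x @ replicate l' y @ [c2])) @ VV l'') []"
        by blast
      from run_append[THEN iffD1, OF rest1] obtain Qb where
        rb: "run Qa (replicate l' y @ [c2]) Qb" and
        rest2: "run Qb (([c1] @ (replicate l' x @ replicate l' y @ [c2])) @ VV l'') []" by blast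
      from run_append[THEN iffD1, OF rest2] obtain Qd where
        rcd: "run Qb ([c1] @ (replicate l' x @ replicate l' y @ [c2])) Qd" and re: "run Qd (VV l'') []"
        by blast
      from run_append[THEN iffD1, OF rcd] obtain Qc where
        rc: "run Qb [c1] Qc" and rd: "run Qc (replicate l' x @ replicate l' y @ [c2]) Qd" by blast
      have setS: "set ?S \<subseteq> {y, c2}" by auto
      have hS: "hd ?S \<notin> set (c1 # replicate l' x)" using dd by (cases j) auto
      have Sne: "?S = hd ?S # tl ?S" by simp
      have ra': "run (hd ?S # tl ?S) (c1 # replicate l' x) Qa" using ra unfolding Sne[symmetric] .
      from run_blocked[OF ra' hS]
      have "Qa = hd ?S # tl ?S @ c1 # replicate l' x" .
      then have qa: "Qa = ?S @ c1 # replicate l' x" by simp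
      obtain i C where i: "Qb = drop i Qa @ C"
        "\<forall>a. count_list (take i Qa) a + count_list C a \<le> count_list (replicate l' y @ [c2]) a"
        using run_drop[OF rb] by blast
      have il: "i < length ?S"
      proof (rule ccontr)
        assume "\<not> i < length ?S"
        have t1: "take i Qa = take i ?S @ take (i - length ?S) (c1 # replicate l' x)"
          unfolding qa by (rule take_append)
        have "take i ?S = ?S" using \<open>\<not> i < length ?S\<close> by (simp only: take_all_iff)
        then have "count_list (take i Qa) c2 \<ge> count_list ?S c2" unfolding t1 by simp
        moreover have "count_list ?S c2 = 2" using dd by (simp add: count_rep)
        ultimately have "count_list (take i Qa) c2 \<ge> 2" by simp
        moreover have "count_list (replicate l' y @ [c2]) c2 = 1" using dd by (simp add: count_rep)
        ultimately show False using i(2)[rule_format, of c2] by simp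
      qed
      define U where "U = drop i ?S"
      have "drop i Qa = drop i ?S @ drop (i - length ?S) (c1 # replicate l' x)"
        unfolding qa by (rule drop_append)
      also have "i - length ?S = 0" using il by simp
      finally have "drop i Qa = U @ c1 # replicate l' x" unfolding U_def by simp
      then have qb: "Qb = U @ c1 # replicate l' x @ C" using i(1) by simp
      have Une: "U \<noteq> []" using il unfolding U_def by (simp only: drop_eq_Nil not_le)
      have hU: "hd U \<noteq> c1"
      proof -
        have "hd U \<in> set ?S" using Une unfolding U_def by (metis hd_in_set in_set_dropD)
        then show ?thesis using setS dd by auto
      qed
      have qc: "Qc = Qb @ [c1]"
      proof -
        from rc consider "Qc = Qb @ [c1]" | "Qb \<noteq> []" "hd Qb = c1" by auto
        then show ?thesis
        proof cases
          case 2
          then have "hd (U @ c1 # replicate l' x @ C) = c1" using qb by simp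
          then show ?thesis using hU hd_append2[OF Une] by simp
        qed simp
      qed
      have qc': "Qc = U @ c1 # (replicate l' x @ C @ [c1])" using qc qb by simp
      have ri: "run (U @ c1 # (replicate l' x @ C @ [c1])) (replicate l' x @ replicate l' y @ [c2]) Qd"
        using rd unfolding qc' .
      have nc: "c1 \<notin> set (replicate l' x @ replicate l' y @ [c2])" using dd by auto
      from run_intact[OF ri nc] obtain A' C' where "Qd = A' @ c1 # (replicate l' x @ C @ [c1]) @ C'"
        by blast
      then have "run ((A' @ [c1]) @ replicate l' x @ (C @ [c1] @ C')) (VV l'') []" using re by simp
      from claimR[OF _ _ this] show False using Suc by simp
    qed
  qed
qed


lemma take_app_ge: "length A \<le> i \<Longrightarrow> take i (A @ B) = A @ take (i - length A) B" by simp
lemma drop_app_ge: "length A \<le> i \<Longrightarrow> drop i (A @ B) = drop (i - length A) B" by simp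
lemma take_app_le: "i \<le> length A \<Longrightarrow> take i (A @ B) = take i A" by simp
lemma drop_app_le: "i \<le> length A \<Longrightarrow> drop i (A @ B) = drop i A @ B" by simp

lemma pair_empty:
  assumes "run [] (sg (Suc l) @ sg (Suc l)) Q2" "run Q2 (VV l) []"
  shows "Q2 = []"
proof -
  let ?v = "sg (Suc l)"
  from run_append[THEN iffD1, OF assms(1)] obtain Q1 where r1: "run [] ?v Q1" and r2: "run Q1 ?v Q2"
    by blast
  have "Q1 = take (length ?v) ?v" using first_copy[of "length ?v" "Suc l" Q1] r1 by simp
  then have q1: "Q1 = ?v" by simp
  have "run ?v (take (length ?v) ?v) Q2" using r2 q1 by simp
  from second_copy[OF _ this] obtain q where q: "q \<le> length ?v"
    "Q2 = drop q ?v @ take (length ?v - q) (drop q ?v)" by auto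
  then have q2: "Q2 = drop q ?v @ drop q ?v" by simp
  show ?thesis
  proof (cases "q < length ?v")
    case True
    from lemD[OF True] assms(2) q2 show ?thesis by simp
  next
    case False
    then show ?thesis using q2 by simp
  qed
qed

fun iq :: "nat \<Rightarrow> nat \<Rightarrow> 'a list" where
  "iq 0 i = []"
| "iq (Suc l) i = (if i \<le> 2 * Suc l + 2 then take i (sg (Suc l))
     else if i \<le> 2 * (2 * Suc l + 2) then drop (i - (2 * Suc l + 2)) (sg (Suc l))
     else iq l (i - 2 * (2 * Suc l + 2)))"

lemma len_VV_Suc: "length (VV (Suc l)) = 2 * (2 * Suc l + 2) + length (VV l)"
  by (simp add: VV_Suc sg_eq)

lemma uniq:
  "i \<le> length (VV l) \<Longrightarrow> run [] (take i (VV l)) Q \<Longrightarrow> run Q (drop i (VV l)) [] \<Longrightarrow> Q = iq l i"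
proof (induction l arbitrary: i Q)
  case 0
  then show ?case by (simp add: VV_0)
next
  case (Suc l)
  let ?v = "sg (Suc l)"
  let ?n = "2 * Suc l + 2"
  have lv: "length ?v = ?n" by (simp add: sg_eq)
  have VVe: "VV (Suc l) = ?v @ ?v @ VV l" by (rule VV_Suc)
  show ?case
  proof (cases "i \<le> ?n")
    case True
    have "take i (VV (Suc l)) = take i ?v" using True lv unfolding VVe by simp
    then have "run [] (take i ?v) Q" using Suc.prems(2) by simp
    from first_copy[OF _ this] True lv have "Q = take i ?v" by simp
    then show ?thesis using True by simp
  next
    case False
    show ?thesis
    proof (cases "i \<le> 2 * ?n")
      case True
      define p where "p = i - ?n"
      have pl: "p \<le> length ?v" using True lv unfolding p_def by simp
      have tk: "take i (VV (Suc l)) = ?v @ take p ?v"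
        unfolding VVe using False True lv take_app_ge[of ?v i] take_app_le[of p ?v] p_def by simp
      have dr: "drop i (VV (Suc l)) = drop p ?v @ VV l"
        unfolding VVe using False True lv drop_app_ge[of ?v i] drop_app_le[of p ?v] p_def by simp
      from run_append[THEN iffD1, OF Suc.prems(2)[unfolded tk]] obtain Q1 where
        r1: "run [] ?v Q1" and r2: "run Q1 (take p ?v) Q" by blast
      have "Q1 = take (length ?v) ?v" using first_copy[of "length ?v" "Suc l" Q1] r1 by simp
      then have q1: "Q1 = ?v" by simp
      from second_copy[OF pl r2[unfolded q1]] obtain q where q: "q \<le> p"
        "Q = drop q ?v @ take (p - q) (drop q ?v)" by auto
      from run_append[THEN iffD1, OF Suc.prems(3)[unfolded dr]] obtain Q2 where
        r3: "run Q (drop p ?v) Q2" and r4: "run Q2 (VV l) []" by blast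
      have "run [] (?v @ ?v) Q2"
      proof -
        have "run ?v (take p ?v @ drop p ?v) Q2" using r2 r3 q1 run_append by blast
        then have "run ?v ?v Q2" by simp
        then show ?thesis using r1 q1 run_append by blast
      qed
      from pair_empty[OF this r4] have "Q2 = []" .
      then have "length Q \<le> length (drop p ?v)" using run_len r3 by blast
      moreover have "length Q = (length ?v - q) + (p - q)" using q pl by simp
      ultimately have "q = p" using q(1) pl by simp
      then have "Q = drop p ?v" using q by simp
      then show ?thesis using False True unfolding p_def by simp
    next
      case False2: False
      define p where "p = i - 2 * ?n"
      have VVe': "VV (Suc l) = (?v @ ?v) @ VV l" using VVe by simp
      have ll: "length (?v @ ?v) \<le> i" using False2 lv by simp
      have tk: "take i (VV (Suc l)) = (?v @ ?v) @ take p (VV l)"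
        unfolding VVe' take_app_ge[OF ll] p_def using lv by simp
      have dr: "drop i (VV (Suc l)) = drop p (VV l)" unfolding VVe' drop_app_ge[OF ll] p_def using lv by simp
      have pl: "p \<le> length (VV l)" using Suc.prems(1) False2 lv len_VV_Suc unfolding p_def by simp
      from run_append[THEN iffD1, OF Suc.prems(2)[unfolded tk]] obtain Q2 where
        r1: "run [] (?v @ ?v) Q2" and r2: "run Q2 (take p (VV l)) Q" by blast
      have r3: "run Q (drop p (VV l)) []" using Suc.prems(3) dr by simp
      have "run Q2 (take p (VV l) @ drop p (VV l)) []" using r2 r3 run_append by blast
      then have "run Q2 (VV l) []" by simp
      from pair_empty[OF r1 this] have "Q2 = []" .
      then have "Q = iq l p" using Suc.IH[OF pl] r2 r3 by simp
      then show ?thesis using False False2 unfolding p_def by simp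
    qed
  qed
qed


lemma voff_self: "voff l l = 0" by (simp add: voff_def)

lemma voff_Suc: "k \<le> l \<Longrightarrow> voff (Suc l) k = 2 * (2 * Suc l + 2) + voff l k"
proof -
  assume "k \<le> l"
  then have "{k<..Suc l} = insert (Suc l) {k<..l}" by auto
  then show ?thesis by (simp add: voff_def)
qed

lemma iq_0: "iq l 0 = []" by (cases l) auto

lemma iq_shift: "iq (Suc l) (2 * (2 * Suc l + 2) + j) = iq l j"
proof (cases j)
  case 0 then show ?thesis by (simp add: iq_0 sg_eq)
qed simp

declare iq.simps(2)[simp del]

lemma iq_voff:
  assumes "1 \<le> k" "k \<le> l" "i \<le> 2 * k + 2"
  shows "iq l (voff l k + i) = take i (sg k) \<and> iq l (voff l k + (2 * k + 2) + i) = drop i (sg k)"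
  using assms
proof (induction l)
  case 0 then show ?case by simp
next
  case (Suc l)
  show ?case
  proof (cases "k = Suc l")
    case True
    have a: "iq (Suc l) (voff (Suc l) k + i) = take i (sg k)" using True Suc.prems by (simp add: voff_self iq.simps(2))
    have b: "iq (Suc l) (voff (Suc l) k + (2 * k + 2) + i) = drop i (sg k)"
    proof (cases i)
      case 0 then show ?thesis using True by (simp add: voff_self sg_eq iq.simps(2))
    next
      case (Suc i') then show ?thesis using True Suc.prems by (simp add: voff_self iq.simps(2))
    qed
    show ?thesis using a b by simp
  next
    case False
    then have kl: "k \<le> l" using Suc.prems by simp
    have IH: "iq l (voff l k + i) = take i (sg k) \<and> iq l (voff l k + (2 * k + 2) + i) = drop i (sg k)"
      using Suc.IH Suc.prems kl by simp
    have i1: "voff (Suc l) k + i = 2 * (2 * Suc l + 2) + (voff l k + i)" using voff_Suc[OF kl] by simp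
    have i2: "voff (Suc l) k + (2 * k + 2) + i = 2 * (2 * Suc l + 2) + (voff l k + (2 * k + 2) + i)"
      using voff_Suc[OF kl] by simp
    have "iq (Suc l) (voff (Suc l) k + i) = iq l (voff l k + i)" unfolding i1 by (rule iq_shift)
    moreover have "iq (Suc l) (voff (Suc l) k + (2 * k + 2) + i) = iq l (voff l k + (2 * k + 2) + i)"
      unfolding i2 by (rule iq_shift)
    ultimately show ?thesis using IH by simp
  qed
qed

lemma voff_len:
  assumes "1 \<le> k" "k \<le> l"
  shows "voff l k + 2 * (2 * k + 2) \<le> length (VV l)"
  using assms
proof (induction l)
  case 0 then show ?case by simp
next
  case (Suc l)
  show ?case
  proof (cases "k = Suc l")
    case True then show ?thesis using len_VV_Suc[of l] by (simp add: voff_self)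
  next
    case False
    then have kl: "k \<le> l" using Suc.prems by simp
    then show ?thesis using Suc.IH Suc.prems voff_Suc[OF kl] len_VV_Suc[of l] by simp
  qed
qed

lemma run_VV: "run [] (VV l) []"
proof (induction l)
  case 0 then show ?case by (simp add: VV_0)
next
  case (Suc l)
  have "run [] (sg (Suc l)) ([] @ sg (Suc l))" by (rule run_push_all)
  moreover have "run (sg (Suc l) @ []) (sg (Suc l)) []" by (rule run_pop_all)
  ultimately have "run [] (sg (Suc l) @ sg (Suc l)) []" using run_append by fastforce
  then have "run [] ((sg (Suc l) @ sg (Suc l)) @ VV l) []"
    using Suc run_append[of "[]" "sg (Suc l) @ sg (Suc l)" "VV l" "[]"] by blast
  then show ?case by (simp add: VV_Suc)
qed

lemma len_sg: "length (sg s) = 2 * s + 2" by (simp add: sg_eq)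

end


lemma test_uniq: "distinct [c1,c2,x,y] \<Longrightarrow> i \<le> length (Vword c1 c2 x y l) \<Longrightarrow> run [] (take i (Vword c1 c2 x y l)) Q \<Longrightarrow> run Q (drop i (Vword c1 c2 x y l)) [] \<Longrightarrow> Q = iq c1 c2 x y l i"
  by (rule uniq)


lemma qstep_run: "qstep (Q, u) (Q', u') \<Longrightarrow> \<exists>a. u = a # u' \<and> run Q [a] Q'"
  by (auto elim!: qstep.cases)

lemma acc_snd:
  assumes "accepting_comp w cs" "i < length cs"
  shows "snd (cs ! i) = drop i w"
  using assms(2)
proof (induction i)
  case 0
  from assms(1) have "cs \<noteq> []" "hd cs = ([], w)" by (auto simp: accepting_comp_def)
  then show ?case by (simp add: hd_conv_nth)
next
  case (Suc i)
  then have st: "qstep (cs ! i) (cs ! Suc i)" using assms(1) by (auto simp: accepting_comp_def)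
  obtain Q u Q' u' where e: "cs ! i = (Q, u)" "cs ! Suc i = (Q', u')" by (cases "cs ! i", cases "cs ! Suc i") auto
  from qstep_run[OF st[unfolded e]] obtain a where "u = a # u'" by blast
  moreover have "u = drop i w" using Suc e by simp
  ultimately have "u' = drop (Suc i) w" by (metis drop_Suc list.sel(3) tl_drop)
  then show ?case using e by simp
qed

lemma acc_len:
  assumes "accepting_comp w cs"
  shows "length cs = length w + 1"
proof -
  have ne: "cs \<noteq> []" and lst: "last cs = ([], [])" using assms by (auto simp: accepting_comp_def)
  let ?n = "length cs"
  have "snd (cs ! (?n - 1)) = []" using lst ne by (simp add: last_conv_nth)
  then have "drop (?n - 1) w = []" using acc_snd[OF assms, of "?n - 1"] ne by simp
  then have a: "length w \<le> ?n - 1" by simp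
  have "\<not> length w < ?n - 1"
  proof
    assume h: "length w < ?n - 1"
    then have st: "qstep (cs ! length w) (cs ! Suc (length w))"
      using assms by (auto simp: accepting_comp_def)
    obtain Q u Q' u' where e: "cs ! length w = (Q, u)" "cs ! Suc (length w) = (Q', u')"
      by (cases "cs ! length w", cases "cs ! Suc (length w)") auto
    from qstep_run[OF st[unfolded e]] obtain a where "u = a # u'" by blast
    moreover have "u = drop (length w) w" using acc_snd[OF assms, of "length w"] h e by simp
    ultimately show False by simp
  qed
  then show ?thesis using a ne by (cases cs) auto
qed

lemma acc_run:
  assumes "accepting_comp w cs" "i + k \<le> length w"
  shows "run (fst (cs ! i)) (take k (drop i w)) (fst (cs ! (i + k)))"
  using assms(2)
proof (induction k)
  case 0 then show ?case by simp
next
  case (Suc k)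
  have lc: "length cs = length w + 1" by (rule acc_len[OF assms(1)])
  then have st: "qstep (cs ! (i + k)) (cs ! Suc (i + k))"
    using assms(1) Suc.prems by (auto simp: accepting_comp_def)
  obtain Q u Q' u' where e: "cs ! (i + k) = (Q, u)" "cs ! Suc (i + k) = (Q', u')"
    by (cases "cs ! (i + k)", cases "cs ! Suc (i + k)") auto
  from qstep_run[OF st[unfolded e]] obtain a where a: "u = a # u'" "run Q [a] Q'" by blast
  have "u = drop (i + k) w" using acc_snd[OF assms(1), of "i + k"] lc Suc.prems e by simp
  then have "a = w ! (i + k)" using a(1) by (metis nth_via_drop)
  have tk: "take (Suc k) (drop i w) = take k (drop i w) @ [w ! (i + k)]"
    using Suc.prems by (simp add: take_Suc_conv_app_nth)
  have "run (fst (cs ! i)) (take k (drop i w)) Q" using Suc e by simp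
  then have "run (fst (cs ! i)) (take k (drop i w) @ [w ! (i + k)]) Q'"
    using a(2) \<open>a = w ! (i + k)\<close> run_append by blast
  then show ?case using tk e by simp
qed

lemma run_comp:
  "run Q w Q' \<Longrightarrow> \<exists>cs. cs \<noteq> [] \<and> hd cs = (Q, w) \<and> last cs = (Q', []) \<and>
     (\<forall>i. Suc i < length cs \<longrightarrow> qstep (cs ! i) (cs ! Suc i))"
proof (induction w arbitrary: Q)
  case Nil
  then show ?case by (intro exI[of _ "[(Q, [])]"]) simp
next
  case (Cons a w)
  from Cons.prems consider (push) "run (Q @ [a]) w Q'" | (pop) "Q \<noteq> []" "hd Q = a" "run (tl Q) w Q'" by auto
  then show ?case
  proof cases
    case push
    from Cons.IH[OF push] obtain cs where cs: "cs \<noteq> []" "hd cs = (Q @ [a], w)" "last cs = (Q', [])"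
      "\<forall>i. Suc i < length cs \<longrightarrow> qstep (cs ! i) (cs ! Suc i)" by blast
    have "\<forall>i. Suc i < length ((Q, a # w) # cs) \<longrightarrow> qstep (((Q, a # w) # cs) ! i) (((Q, a # w) # cs) ! Suc i)"
    proof (intro allI impI)
      fix i assume "Suc i < length ((Q, a # w) # cs)"
      then show "qstep (((Q, a # w) # cs) ! i) (((Q, a # w) # cs) ! Suc i)"
      proof (cases i)
        case 0
        then show ?thesis using cs(1,2) by (simp add: hd_conv_nth[symmetric] qstep.push)
      next
        case (Suc j) then show ?thesis using cs(4) \<open>Suc i < _\<close> by simp
      qed
    qed
    then show ?thesis using cs by (intro exI[of _ "(Q, a # w) # cs"]) simp
  next
    case pop
    from Cons.IH[OF pop(3)] obtain cs where cs: "cs \<noteq> []" "hd cs = (tl Q, w)" "last cs = (Q', [])"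
      "\<forall>i. Suc i < length cs \<longrightarrow> qstep (cs ! i) (cs ! Suc i)" by blast
    have Qe: "Q = a # tl Q" using pop by (cases Q) auto
    have "\<forall>i. Suc i < length ((Q, a # w) # cs) \<longrightarrow> qstep (((Q, a # w) # cs) ! i) (((Q, a # w) # cs) ! Suc i)"
    proof (intro allI impI)
      fix i assume "Suc i < length ((Q, a # w) # cs)"
      then show "qstep (((Q, a # w) # cs) ! i) (((Q, a # w) # cs) ! Suc i)"
      proof (cases i)
        case 0
        have "qstep (a # tl Q, a # w) (tl Q, w)" by (rule qstep.pop)
        then show ?thesis using 0 cs(1,2) Qe by (simp add: hd_conv_nth[symmetric])
      next
        case (Suc j) then show ?thesis using cs(4) \<open>Suc i < _\<close> by simp
      qed
    qed
    then show ?thesis using cs by (intro exI[of _ "(Q, a # w) # cs"]) simp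
  qed
qed


lemma card_less_Suc: "card {j. j < Suc n \<and> P j} = card {j. j < n \<and> P j} + (if P n then 1 else 0)"
proof -
  have e: "{j. j < Suc n \<and> P j} = (if P n then insert n {j. j < n \<and> P j} else {j. j < n \<and> P j})"
    by (auto simp: less_Suc_eq)
  have f: "finite {j. j < n \<and> P j}" by simp
  show ?thesis unfolding e using f by (simp add: card_insert_disjoint)
qed

theorem theorem3:
  fixes c1 c2 x y :: 'a and l :: nat
  assumes "distinct [c1, c2, x, y]" and "l \<ge> 1"
  shows "(\<exists>!cs. accepting_comp (Vword c1 c2 x y l) cs) \<and>
    (\<forall>cs. accepting_comp (Vword c1 c2 x y l) cs \<longrightarrow>
       (\<forall>k i. 1 \<le> k \<and> k \<le> l \<and> i < 2 * k + 2 \<longrightarrow>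
          matched cs (voff l k + i) (voff l k + (2 * k + 2) + i)))"
proof -
  note dist = assms(1)
  let ?V = "Vword c1 c2 x y l"
  let ?I = "iq c1 c2 x y l"
  define CS where "CS = map (\<lambda>i. (?I i, drop i ?V)) [0..<length ?V + 1]"
  have lenCS: "length CS = length ?V + 1" by (simp add: CS_def)
  have CSn: "\<And>j. j \<le> length ?V \<Longrightarrow> CS ! j = (?I j, drop j ?V)"
  proof -
    fix j assume "j \<le> length ?V"
    then have "j < length [0..<length ?V + 1]" by simp
    then show "CS ! j = (?I j, drop j ?V)" unfolding CS_def by (simp del: upt_Suc)
  qed
  have all: "\<And>cs. accepting_comp ?V cs \<Longrightarrow> cs = CS"
  proof -
    fix cs assume acc: "accepting_comp ?V cs"
    have lc: "length cs = length ?V + 1" by (rule acc_len[OF acc])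
    have ne: "cs \<noteq> []" and hd: "hd cs = ([], ?V)" and lst: "last cs = ([], [])"
      using acc by (auto simp: accepting_comp_def)
    have f0: "fst (cs ! 0) = []" using hd ne by (simp add: hd_conv_nth)
    have fl: "fst (cs ! length ?V) = []" using lst ne lc by (simp add: last_conv_nth)
    show "cs = CS"
    proof (rule nth_equalityI)
      show "length cs = length CS" using lc lenCS by simp
    next
      fix j assume "j < length cs"
      then have jl: "j \<le> length ?V" using lc by simp
      have sj: "snd (cs ! j) = drop j ?V" using acc_snd[OF acc] \<open>j < length cs\<close> by simp
      have r1: "run [] (take j ?V) (fst (cs ! j))" using acc_run[OF acc, of 0 j] jl f0 by simp
      have r2: "run (fst (cs ! j)) (take (length ?V - j) (drop j ?V)) (fst (cs ! (j + (length ?V - j))))"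
        using acc_run[OF acc, of j "length ?V - j"] jl by simp
      then have r2': "run (fst (cs ! j)) (drop j ?V) []" using jl fl by simp
      have "fst (cs ! j) = ?I j" by (rule uniq[OF dist jl r1 r2'])
      then have "cs ! j = (?I j, drop j ?V)" using sj by (metis prod.collapse)
      then show "cs ! j = CS ! j" using CSn[OF jl] by simp
    qed
  qed
  from run_comp[OF run_VV[OF dist, of l]] obtain cs0 where
    "cs0 \<noteq> [] \<and> hd cs0 = ([], ?V) \<and> last cs0 = ([], []) \<and>
    (\<forall>i. Suc i < length cs0 \<longrightarrow> qstep (cs0 ! i) (cs0 ! Suc i))"
    by (elim exE)
  then have acc0: "accepting_comp ?V cs0" unfolding accepting_comp_def .
  have accCS: "accepting_comp ?V CS" using acc0 all[OF acc0] by simp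
  have part1: "\<exists>!cs. accepting_comp ?V cs"
    apply (rule ex1I[of _ CS])
     apply (rule accCS)
    apply (erule all)
    done
  define len where "len j = length (?I j)" for j
  have isp: "\<And>j. j < length ?V \<Longrightarrow> is_push CS j \<longleftrightarrow> len j < len (Suc j)"
    using CSn by (simp add: is_push_def len_def)
  have stepl: "\<And>j. j < length ?V \<Longrightarrow> (is_push CS j \<and> len (Suc j) = len j + 1) \<or> (\<not> is_push CS j \<and> len j = len (Suc j) + 1)"
  proof -
    fix j assume jl: "j < length ?V"
    then have "qstep (CS ! j) (CS ! Suc j)" using accCS lenCS by (simp add: accepting_comp_def)
    then have "qstep (?I j, drop j ?V) (?I (Suc j), drop (Suc j) ?V)" using CSn jl by simp
    from qstep_run[OF this] obtain a where "run (?I j) [a] (?I (Suc j))" by blast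
    then have "?I (Suc j) = ?I j @ [a] \<or> (?I j \<noteq> [] \<and> ?I (Suc j) = tl (?I j))" by auto
    then show "(is_push CS j \<and> len (Suc j) = len j + 1) \<or> (\<not> is_push CS j \<and> len j = len (Suc j) + 1)"
      using isp[OF jl] unfolding len_def by (cases "?I j") auto
  qed
  have cnt: "\<And>n. n \<le> length ?V \<Longrightarrow>
      card {j. j < n \<and> is_push CS j} + card {j. j < n \<and> \<not> is_push CS j} = n \<and>
      card {j. j < n \<and> is_push CS j} = card {j. j < n \<and> \<not> is_push CS j} + len n"
  proof -
    fix n show "n \<le> length ?V \<Longrightarrow>
      card {j. j < n \<and> is_push CS j} + card {j. j < n \<and> \<not> is_push CS j} = n \<and>
      card {j. j < n \<and> is_push CS j} = card {j. j < n \<and> \<not> is_push CS j} + len n"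
    proof (induction n)
      case 0 then show ?case by (simp add: len_def iq_0[OF dist])
    next
      case (Suc n)
      then have IH: "card {j. j < n \<and> is_push CS j} + card {j. j < n \<and> \<not> is_push CS j} = n \<and>
        card {j. j < n \<and> is_push CS j} = card {j. j < n \<and> \<not> is_push CS j} + len n" by simp
      have nl: "n < length ?V" using Suc.prems by simp
      have c1e: "card {j. j < Suc n \<and> is_push CS j} = card {j. j < n \<and> is_push CS j} + (if is_push CS n then 1 else 0)"
        by (rule card_less_Suc)
      have c2e: "card {j. j < Suc n \<and> \<not> is_push CS j} = card {j. j < n \<and> \<not> is_push CS j} + (if \<not> is_push CS n then 1 else 0)"
        by (rule card_less_Suc)
      from stepl[OF nl] show ?case
      proof
        assume h: "is_push CS n \<and> len (Suc n) = len n + 1"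
        then show ?case using IH c1e c2e by simp
      next
        assume h: "\<not> is_push CS n \<and> len n = len (Suc n) + 1"
        then show ?case using IH c1e c2e by simp
      qed
    qed
  qed
  have part2: "\<forall>cs. accepting_comp ?V cs \<longrightarrow>
       (\<forall>k i. 1 \<le> k \<and> k \<le> l \<and> i < 2 * k + 2 \<longrightarrow>
          matched cs (voff l k + i) (voff l k + (2 * k + 2) + i))"
  proof (intro allI impI)
    fix cs k i
    assume acc: "accepting_comp ?V cs" and ki: "1 \<le> k \<and> k \<le> l \<and> i < 2 * k + 2"
    then have cs: "cs = CS" using all by simp
    have k1: "1 \<le> k" and kl: "k \<le> l" and il: "i < 2 * k + 2" using ki by auto
    let ?p = "voff l k + i" and ?q = "voff l k + (2 * k + 2) + i"
    have vl: "voff l k + 2 * (2 * k + 2) \<le> length ?V" by (rule voff_len[OF dist k1 kl])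
    have lsg: "length (vblock c1 c2 x y k) = 2 * k + 2" by (simp add: vblock_def)
    have Ip: "len ?p = i" using iq_voff[OF dist k1 kl, of i] il lsg unfolding len_def by simp
    have Ip1: "len (Suc ?p) = Suc i" using iq_voff[OF dist k1 kl, of "Suc i"] il lsg unfolding len_def by simp
    have Iq: "len ?q = 2 * k + 2 - i" using iq_voff[OF dist k1 kl, of i] il lsg unfolding len_def by simp
    have Iq1: "len (Suc ?q) = 2 * k + 2 - Suc i"
      using iq_voff[OF dist k1 kl, of "Suc i"] il lsg unfolding len_def by simp
    have pl: "?p < length ?V" and ql: "?q < length ?V" using vl il by auto
    have pp: "is_push CS ?p" using isp[OF pl] Ip Ip1 by simp
    have nq: "\<not> is_push CS ?q" using isp[OF ql] Iq Iq1 il by simp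
    have cp: "card {j. j < ?p \<and> is_push CS j} + card {j. j < ?p \<and> \<not> is_push CS j} = ?p \<and>
      card {j. j < ?p \<and> is_push CS j} = card {j. j < ?p \<and> \<not> is_push CS j} + i"
      using cnt[of ?p] pl Ip by simp
    have cq: "card {j. j < ?q \<and> is_push CS j} + card {j. j < ?q \<and> \<not> is_push CS j} = ?q \<and>
      card {j. j < ?q \<and> is_push CS j} = card {j. j < ?q \<and> \<not> is_push CS j} + (2 * k + 2 - i)"
      using cnt[of ?q] ql Iq by simp
    have "card {j. j < ?p \<and> is_push CS j} = card {j. j < ?q \<and> \<not> is_push CS j}"
      using cp cq il by linarith
    then show "matched cs ?p ?q" unfolding cs matched_def using pp nq ql lenCS by simp
  qed
  show ?thesis using part1 part2 by (rule conjI)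
qed


end
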